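(* Let $\Gamma$ be a temporal theory and $M$ a total THT model, and let $\mathrm{Th}(M):=\{\varphi\mid M,(0,0)\models\varphi\}$. The following are equivalent: (1) $M$ is a temporal equilibrium model of $\Gamma$; (2) for every temporal formula $\varphi$: $\Gamma\cup\{\neg\psi\mid\psi\notin\mathrm{Th}(M)\}\models_{\mathrm{THT}}\varphi$ iff $\varphi\in\mathrm{Th}(M)$.
   Context: Fix a countable set $\mathbb{P}$ of atoms. Temporal formulas: $\varphi ::= p\mid\bot\mid\varphi\wedge\varphi\mid\varphi\vee\varphi\mid\varphi\to\varphi\mid\circ\varphi\mid\varphi\,\mathsf{U}\,\varphi\mid\varphi\,\mathsf{R}\,\varphi$; $\neg\varphi:=\varphi\to\bot$. The THT frame is $W=\mathbb{N}\times\{0,1\}$, $(i,h)\preccurlyeq(j,t)$ iff $i=j$ and $h\le t$, $S((i,k))=(i+1,k)$. A THT model is $((W,\preccurlyeq,S),V)$ with $V:W\to2^{\mathbb{P}}$ and $V((i,0))\subseteq V((i,1))$. Satisfaction: $M,w\models p$ iff $p\in V(w)$; $\bot$ never; $\wedge,\vee$ pointwise; $M,w\models\varphi\to\psi$ iff for all $v\succcurlyeq w$, $M,v\models\varphi$ implies $M,v\models\psi$; $M,w\models\circ\varphi$ iff $M,S(w)\models\varphi$; $\varphi\,\mathsf{U}\,\psi$: some $k\ge0$ with $M,S^k(w)\models\psi$ and $M,S^i(w)\models\varphi$ for all $0\le i<k$; $\varphi\,\mathsf{R}\,\psi$: for all $k\ge0$, $M,S^k(w)\models\psi$ or $M,S^i(w)\models\varphi$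 for some $0\le i<k$. $M$ is total if $V((i,0))=V((i,1))$ for all $i$. $M'\le M$ iff $V'((i,1))=V((i,1))$ and $V'((i,0))\subseteq V((i,0))$ for all $i$; $M'<M$ iff $M'\le M$ and $V'\ne V$. A temporal equilibrium model of $\Gamma$ is a total THT model $M$ with $M,(0,0)\models\Gamma$ such that no THT model $M'<M$ has $M',(0,0)\models\Gamma$. $\Gamma\models_{\mathrm{THT}}\varphi$ means every THT model and world satisfying all formulas of $\Gamma$ satisfies $\varphi$. *)

theory Defs
  imports Main "HOL-Library.Countable"
begin

datatype 'a tform =
    Atom 'a
  | Bot
  | And "'a tform" "'a tform"
  | Or "'a tform" "'a tform"
  | Imp "'a tform" "'a tform"
  | Next "'a tform"
  | Until "'a tform" "'a tform"
  | Release "'a tform" "'a tform"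

definition Neg :: "'a tform \<Rightarrow> 'a tform" where
  "Neg \<phi> = Imp \<phi> Bot"

text \<open>Worlds are pairs (i, k) with i :: nat and k :: bool, where False encodes 0 (here)
  and True encodes 1 (there).\<close>

type_synonym world = "nat \<times> bool"
type_synonym 'a valuation = "world \<Rightarrow> 'a set"

definition wle :: "world \<Rightarrow> world \<Rightarrow> bool" where
  "wle w v \<longleftrightarrow> fst w = fst v \<and> snd w \<le> snd v"

definition succ :: "world \<Rightarrow> world" where
  "succ w = (Suc (fst w), snd w)"

definition is_tht :: "'a valuation \<Rightarrow> bool" where
  "is_tht V \<longleftrightarrow> (\<forall>i. V (i, False) \<subseteq> V (i, True))"

fun sat :: "'a valuation \<Rightarrow> world \<Rightarrow> 'a tform \<Rightarrow> bool" where
  "sat V w (Atom p) = (p \<in> V w)"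
| "sat V w Bot = False"
| "sat V w (And \<phi> \<psi>) = (sat V w \<phi> \<and> sat V w \<psi>)"
| "sat V w (Or \<phi> \<psi>) = (sat V w \<phi> \<or> sat V w \<psi>)"
| "sat V w (Imp \<phi> \<psi>) = (\<forall>v. wle w v \<longrightarrow> sat V v \<phi> \<longrightarrow> sat V v \<psi>)"
| "sat V w (Next \<phi>) = sat V (succ w) \<phi>"
| "sat V w (Until \<phi> \<psi>) =
     (\<exists>k. sat V ((succ ^^ k) w) \<psi> \<and> (\<forall>i<k. sat V ((succ ^^ i) w) \<phi>))"
| "sat V w (Release \<phi> \<psi>) =
     (\<forall>k. sat V ((succ ^^ k) w) \<psi> \<or> (\<exists>i<k. sat V ((succ ^^ i) w) \<phi>))"

definition is_total :: "'a valuation \<Rightarrow> bool" where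
  "is_total V \<longleftrightarrow> (\<forall>i. V (i, False) = V (i, True))"

definition model_le :: "'a valuation \<Rightarrow> 'a valuation \<Rightarrow> bool" where
  "model_le V' V \<longleftrightarrow> (\<forall>i. V' (i, True) = V (i, True) \<and> V' (i, False) \<subseteq> V (i, False))"

definition model_less :: "'a valuation \<Rightarrow> 'a valuation \<Rightarrow> bool" where
  "model_less V' V \<longleftrightarrow> model_le V' V \<and> V' \<noteq> V"

text \<open>Valuations of THT models are only meaningful on worlds; since the type world is
  exactly the set of worlds, V' \<noteq> V is inequality of valuations.\<close>

definition temporal_equilibrium :: "'a tform set \<Rightarrow> 'a valuation \<Rightarrow> bool" where
  "temporal_equilibrium \<Gamma> V \<longleftrightarrow>
     is_tht V \<and> is_total V \<and> (\<forall>\<gamma>\<in>\<Gamma>. sat V (0, False) \<gamma>) \<and>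
     \<not> (\<exists>V'. is_tht V' \<and> model_less V' V \<and> (\<forall>\<gamma>\<in>\<Gamma>. sat V' (0, False) \<gamma>))"

definition tht_entails :: "'a tform set \<Rightarrow> 'a tform \<Rightarrow> bool" where
  "tht_entails \<Gamma> \<phi> \<longleftrightarrow>
     (\<forall>V w. is_tht V \<longrightarrow> (\<forall>\<gamma>\<in>\<Gamma>. sat V w \<gamma>) \<longrightarrow> sat V w \<phi>)"

definition Th :: "'a valuation \<Rightarrow> 'a tform set" where
  "Th V = {\<phi>. sat V (0, False) \<phi>}"

end

theory Submission
  imports Defs
begin

lemma succ_pow: "(succ ^^ k) (i, h) = (i + k, h)"
  by (induction k) (auto simp: succ_def)

lemma sat_Imp': "sat V (i,h) (Imp a b) = (\<forall>h'. h \<le> h' \<longrightarrow> sat V (i,h') a \<longrightarrow> sat V (i,h') b)"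
  by (auto simp: wle_def)

lemma sat_Until': "sat V (i,h) (Until a b) = (\<exists>k. sat V (i+k,h) b \<and> (\<forall>j<k. sat V (i+j,h) a))"
  by (simp add: succ_pow)

lemma sat_Release': "sat V (i,h) (Release a b) = (\<forall>k. sat V (i+k,h) b \<or> (\<exists>j<k. sat V (i+j,h) a))"
  by (simp add: succ_pow)

lemma sat_Next': "sat V (i,h) (Next a) = sat V (Suc i,h) a"
  by (simp add: succ_def)

lemmas sat_simps' = sat_Imp' sat_Until' sat_Release' sat_Next'

lemma persist: "is_tht V \<Longrightarrow> sat V (i,False) \<phi> \<Longrightarrow> sat V (i,True) \<phi>"
proof (induction \<phi> arbitrary: i)
  case (Atom x) then show ?case by (auto simp: is_tht_def)
next
  case (Imp a b) then show ?case by (simp only: sat_Imp', auto?)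
next
  case (Until a b) then show ?case by (simp only: sat_Until', blast?)
next
  case (Release a b) then show ?case by (simp only: sat_Release', blast?)
next
  case (Next a) then show ?case by (simp only: sat_Next')
qed auto

lemma there_only: assumes A: "\<forall>j. V (j,True) = W (j,True)" shows "sat V (i,True) \<phi> = sat W (i,True) \<phi>"
proof (induction \<phi> arbitrary: i)
  case (Atom x) then show ?case using A by auto
next
  case (Imp a b) then show ?case by (simp only: sat_Imp', auto?)
next
  case (Until a b) then show ?case by (simp only: sat_Until', blast?)
next
  case (Release a b) then show ?case by (simp only: sat_Release', blast?)
next
  case (Next a) then show ?case by (simp only: sat_Next')
qed auto

lemma total_eq: assumes T: "is_total V" shows "sat V (i,False) \<phi> = sat V (i,True) \<phi>"
proof (induction \<phi> arbitrary: i)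
  case (Atom x) then show ?case using T by (auto simp: is_total_def)
next
  case (Imp a b) then show ?case by (simp only: sat_Imp' all_bool_eq, simp?)
next
  case (Until a b) then show ?case by (simp only: sat_Until', simp?)
next
  case (Release a b) then show ?case by (simp only: sat_Release', simp?)
next
  case (Next a) then show ?case by (simp only: sat_Next')
qed auto

definition shift :: "nat \<Rightarrow> 'a valuation \<Rightarrow> 'a valuation" where
  "shift i V = (\<lambda>(j,h). V (i+j,h))"

lemma sat_shift: "sat V (i+j,h) \<phi> = sat (shift i V) (j,h) \<phi>"
proof (induction \<phi> arbitrary: j h)
  case (Atom x) then show ?case by (auto simp: shift_def)
next
  case (Imp a b) then show ?case by (simp only: sat_Imp')
next
  case (Until a b) then show ?case by (simp only: sat_Until' add.assoc, blast?)
next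
  case (Release a b) then show ?case by (simp only: sat_Release' add.assoc, blast?)
next
  case (Next a) then show ?case using Next.IH[of "Suc j" h] by (simp add: succ_def)
qed auto

definition Nexts :: "nat \<Rightarrow> 'a \<Rightarrow> 'a tform" where
  "Nexts k p = (Next ^^ k) (Atom p)"

lemma sat_Nexts: "sat V (i,h) (Nexts k p) = (p \<in> V (i+k,h))"
  unfolding Nexts_def by (induction k arbitrary: i) (auto simp: sat_Next' succ_def)

lemma sat_Neg: "sat V (i,h) (Neg \<psi>) = (\<forall>h'. h \<le> h' \<longrightarrow> \<not> sat V (i,h') \<psi>)"
  unfolding Neg_def by (simp only: sat_Imp') simp

theorem lemma5p2:
  fixes \<Gamma> :: "('a::countable) tform set" and M :: "'a valuation"
  assumes "is_tht M" and "is_total M"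
  shows "temporal_equilibrium \<Gamma> M \<longleftrightarrow>
    (\<forall>\<phi>. tht_entails (\<Gamma> \<union> {Neg \<psi> | \<psi>. \<psi> \<notin> Th M}) \<phi> \<longleftrightarrow> \<phi> \<in> Th M)"
proof
  assume eq: "temporal_equilibrium \<Gamma> M"
  have MD: "\<forall>\<gamma>\<in>\<Gamma> \<union> {Neg \<psi> | \<psi>. \<psi> \<notin> Th M}. sat M (0,False) \<gamma>"
  proof
    fix \<gamma> assume "\<gamma> \<in> \<Gamma> \<union> {Neg \<psi> | \<psi>. \<psi> \<notin> Th M}"
    then show "sat M (0,False) \<gamma>"
    proof
      assume "\<gamma> \<in> \<Gamma>" then show ?thesis using eq by (auto simp: temporal_equilibrium_def)
    next
      assume "\<gamma> \<in> {Neg \<psi> | \<psi>. \<psi> \<notin> Th M}"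
      then obtain \<psi> where g: "\<gamma> = Neg \<psi>" and n: "\<not> sat M (0,False) \<psi>" by (auto simp: Th_def)
      have "\<not> sat M (0,True) \<psi>" using n total_eq[OF assms(2), of 0 \<psi>] by simp
      then show ?thesis using n g by (simp add: sat_Neg all_bool_eq)
    qed
  qed
  show "\<forall>\<phi>. tht_entails (\<Gamma> \<union> {Neg \<psi> | \<psi>. \<psi> \<notin> Th M}) \<phi> \<longleftrightarrow> \<phi> \<in> Th M"
  proof (intro allI iffI)
    fix \<phi> assume "tht_entails (\<Gamma> \<union> {Neg \<psi> | \<psi>. \<psi> \<notin> Th M}) \<phi>"
    then have "is_tht M \<longrightarrow> (\<forall>\<gamma>\<in>\<Gamma> \<union> {Neg \<psi> | \<psi>. \<psi> \<notin> Th M}. sat M (0,False) \<gamma>) \<longrightarrow> sat M (0,False) \<phi>"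
      unfolding tht_entails_def by blast
    then show "\<phi> \<in> Th M" using MD assms(1) unfolding Th_def by blast
  next
    fix \<phi> assume phi: "\<phi> \<in> Th M"
    show "tht_entails (\<Gamma> \<union> {Neg \<psi> | \<psi>. \<psi> \<notin> Th M}) \<phi>"
      unfolding tht_entails_def
    proof (intro allI impI)
      fix V w assume V: "is_tht V" and D: "\<forall>\<gamma>\<in>\<Gamma> \<union> {Neg \<psi> | \<psi>. \<psi> \<notin> Th M}. sat V w \<gamma>"
      obtain i h where w: "w = (i,h)" by (cases w)
      define W where "W = shift i V"
      have there: "\<forall>j. W (j,True) = M (j,True)"
      proof (intro allI set_eqI)
        fix j p
        show "p \<in> W (j,True) \<longleftrightarrow> p \<in> M (j,True)"
        proof (cases "p \<in> M (j,False)")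
          case True
          have "\<not> sat M (0,False) (Neg (Nexts j p))" using True by (simp add: sat_Neg sat_Nexts all_bool_eq)
          then have "sat V (i,h) (Neg (Neg (Nexts j p)))" using D w by (auto simp: Th_def)
          then have "p \<in> V (i+j,True)" by (simp add: sat_Neg sat_Nexts all_bool_eq)
          then show ?thesis using True assms(2) by (auto simp: W_def shift_def is_total_def)
        next
          case False
          have "\<not> sat M (0,False) (Nexts j p)" using False by (simp add: sat_Nexts)
          then have "sat V (i,h) (Neg (Nexts j p))" using D w by (auto simp: Th_def)
          then have "p \<notin> V (i+j,True)" by (simp add: sat_Neg sat_Nexts all_bool_eq)
          then show ?thesis using False assms(2) by (auto simp: W_def shift_def is_total_def)
        qed
      qed
      have satW: "\<And>\<chi> h. sat V (i,h) \<chi> = sat W (0,h) \<chi>"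
        using sat_shift[of V i 0] by (simp add: W_def)
      show "sat V w \<phi>"
      proof (cases h)
        case True
        have "sat M (0,True) \<phi>" using phi total_eq[OF assms(2), of 0 \<phi>] by (auto simp: Th_def)
        then show ?thesis using w True satW[of True \<phi>] there_only[OF there, of 0 \<phi>] by simp
      next
        case False
        have Wt: "is_tht W" using V by (auto simp: is_tht_def W_def shift_def)
        have Wg: "\<forall>\<gamma>\<in>\<Gamma>. sat W (0,False) \<gamma>" using D w False satW by auto
        have "model_le W M" unfolding model_le_def
          using there Wt assms(2) by (auto simp: is_tht_def is_total_def)
        then have "W = M" using eq Wt Wg by (auto simp: temporal_equilibrium_def model_less_def)
        then show ?thesis using w False satW phi by (simp add: Th_def)
      qed
    qed
  qed
next
  assume H: "\<forall>\<phi>. tht_entails (\<Gamma> \<union> {Neg \<psi> | \<psi>. \<psi> \<notin> Th M}) \<phi> \<longleftrightarrow> \<phi> \<in> Th M"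
  have G: "\<forall>\<gamma>\<in>\<Gamma>. sat M (0,False) \<gamma>"
  proof
    fix \<gamma> assume "\<gamma> \<in> \<Gamma>"
    then have "tht_entails (\<Gamma> \<union> {Neg \<psi> | \<psi>. \<psi> \<notin> Th M}) \<gamma>" by (auto simp: tht_entails_def)
    then show "sat M (0,False) \<gamma>" using H by (auto simp: Th_def)
  qed
  have "\<not> (\<exists>V'. is_tht V' \<and> model_less V' M \<and> (\<forall>\<gamma>\<in>\<Gamma>. sat V' (0, False) \<gamma>))"
  proof
    assume "\<exists>V'. is_tht V' \<and> model_less V' M \<and> (\<forall>\<gamma>\<in>\<Gamma>. sat V' (0, False) \<gamma>)"
    then obtain V' where V': "is_tht V'" and lt: "model_less V' M" and g: "\<forall>\<gamma>\<in>\<Gamma>. sat V' (0, False) \<gamma>"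
      by blast
    have th: "\<forall>j. V' (j,True) = M (j,True)" using lt by (auto simp: model_less_def model_le_def)
    have D: "\<forall>\<gamma>\<in>\<Gamma> \<union> {Neg \<psi> | \<psi>. \<psi> \<notin> Th M}. sat V' (0,False) \<gamma>"
    proof
      fix \<gamma> assume "\<gamma> \<in> \<Gamma> \<union> {Neg \<psi> | \<psi>. \<psi> \<notin> Th M}"
      then show "sat V' (0,False) \<gamma>"
      proof
        assume "\<gamma> \<in> \<Gamma>" then show ?thesis using g by auto
      next
        assume "\<gamma> \<in> {Neg \<psi> | \<psi>. \<psi> \<notin> Th M}"
        then obtain \<psi> where gg: "\<gamma> = Neg \<psi>" and n: "\<not> sat M (0,False) \<psi>" by (auto simp: Th_def)
        have "\<not> sat M (0,True) \<psi>" using n total_eq[OF assms(2), of 0 \<psi>] by simp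
        then have n1: "\<not> sat V' (0,True) \<psi>" using there_only[OF th, of 0 \<psi>] by simp
        then have "\<not> sat V' (0,False) \<psi>" using persist[OF V', of 0 \<psi>] by blast
        then show ?thesis using n1 gg by (simp add: sat_Neg all_bool_eq)
      qed
    qed
    have "\<exists>j p. p \<in> M (j,False) \<and> p \<notin> V' (j,False)"
    proof (rule ccontr)
      assume "\<not> ?thesis"
      then have "\<forall>j. V' (j,False) = M (j,False)" using lt by (auto simp: model_less_def model_le_def)
      then have "V' = M" using th by (intro ext) (metis (full_types) prod.collapse)
      then show False using lt by (simp add: model_less_def)
    qed
    then obtain j p where p: "p \<in> M (j,False)" "p \<notin> V' (j,False)" by blast
    have "Nexts j p \<in> Th M" using p by (simp add: Th_def sat_Nexts)
    then have "tht_entails (\<Gamma> \<union> {Neg \<psi> | \<psi>. \<psi> \<notin> Th M}) (Nexts j p)" using H by blast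
    then have "sat V' (0,False) (Nexts j p)" using D V' by (auto simp: tht_entails_def)
    then show False using p by (simp add: sat_Nexts)
  qed
  then show "temporal_equilibrium \<Gamma> M" using G assms by (simp add: temporal_equilibrium_def)
qed

end
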